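(* Let $\Omega>0$ denote the maximum absolute value of the stored quantities, let $C,D$ be column indices of $X\in\mathbb{R}^{K\times d}$ of the operands, and let $E$ be a target column index. Then there exists a single transformer layer that simulates the AND operation $X[1,E]\leftarrow X[1,C]\wedge X[1,D]$.
   Context: Conventions: rows/columns indexed from $1$; $X[i,j]$ is the $(i,j)$ entry. $\wedge$ is logical AND on values in $\{0,1\}$. $\phi(x)=\max\{x,0\}$ entrywise. Hardmax $\sigma$: row $i$ of $\sigma(\Phi)$ is $\frac{1}{|S_i|}\sum_{k\in S_i}e_k$, $S_i=\{k:\Phi_{ik}=\max_j\Phi_{ij}\}$. For a weighted hypergraph with incident matrix $A\in\mathbb{R}^{n_v\times n_e}$ ($A_{ij}=w(e_j)$ if vertex $v_i\in e_j$, else $0$) and $K\ge\max\{n_v,n_e\}+1$, the padded incident matrix $\widetilde A\in\mathbb{R}^{K\times K}$ has $\widetilde A_{i+1,j+1}=A_{ij}$, zeros elsewhere. A transformer layer on $X\in\mathbb{R}^{K\times d}$ is $f(X,\widetilde A)=f_{\mathrm{mlp}}(f_{\mathrm{attn}}(X,\widetilde A))$, $f_{\mathrm{attn}}(X,\widetilde A)=\sum_{i\in M_A}\psi^{(i)}(X,\widetilde A)+\sum_{i\in M_{A^\top}}\psi^{(i)}(X,\widetilde A^\top)+\sum_{i\in M}\psi^{(i)}(X,I_K)+X$, $\psi(X,B)=B\,\sigma(XW_QW_K^\top X^\top)XW_V$ ($W_Q,W_K\in\mathbb{R}^{d\times2}$, $W_V\in\mathbb{R}^{d\times d}$), $f_{\mathrm{mlp}}(X)=Z^{(4)}W^{(4)}+X$,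 $Z^{(1)}=X$, $Z^{(j+1)}=\phi(Z^{(j)}W^{(j)})$ ($j=1,2,3$). Storage convention: scalars in the top row of a column (rest $0$), arrays of length $K-1$ in rows $2,\dots,K$ (top $0$); designated columns $B_{\mathrm{global}}$ (top $1$, rest $0$), $B_{\mathrm{local}}$ (top $0$, rest $1$), and scratchpad columns. "Simulating an operation" means the layer's weights can be chosen so that applying it to $X$ performs the stated update. *)

theory Defs
  imports Complex_Main
begin

text \<open>Matrices are represented as functions nat => nat => real, indexed from 1;
  the dimensions are passed explicitly and only entries in range matter.\<close>

type_synonym mat = "nat \<Rightarrow> nat \<Rightarrow> real"

definition mmul :: "nat \<Rightarrow> mat \<Rightarrow> mat \<Rightarrow> mat" where
  "mmul n A B = (\<lambda>i j. \<Sum>k=1..n. A i k * B k j)"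

definition transp :: "mat \<Rightarrow> mat" where
  "transp A = (\<lambda>i j. A j i)"

definition idm :: mat where
  "idm = (\<lambda>i j. if i = j then 1 else 0)"

definition madd :: "mat \<Rightarrow> mat \<Rightarrow> mat" where
  "madd A B = (\<lambda>i j. A i j + B i j)"

definition relu :: "mat \<Rightarrow> mat" where
  "relu A = (\<lambda>i j. max (A i j) 0)"

definition hardmax :: "nat \<Rightarrow> mat \<Rightarrow> mat" where
  "hardmax K P = (\<lambda>i j.
     let m = Max ((P i) ` {1..K}); S = {k \<in> {1..K}. P i k = m}
     in if j \<in> S then 1 / real (card S) else 0)"

record head =
  WQ :: mat   \<comment> \<open>d x 2\<close>
  WK :: mat   \<comment> \<open>d x 2\<close>
  WV :: mat   \<comment> \<open>d x d\<close>

record layer =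
  headsA  :: "head list"
  headsAT :: "head list"
  headsI  :: "head list"
  hid1 :: nat
  hid2 :: nat
  hid3 :: nat
  W1 :: mat   \<comment> \<open>d x hid1\<close>
  W2 :: mat   \<comment> \<open>hid1 x hid2\<close>
  W3 :: mat   \<comment> \<open>hid2 x hid3\<close>
  W4 :: mat   \<comment> \<open>hid3 x d\<close>

definition psi :: "nat \<Rightarrow> nat \<Rightarrow> head \<Rightarrow> mat \<Rightarrow> mat \<Rightarrow> mat" where
  "psi K d h X B =
     mmul K B (mmul K (hardmax K (mmul 2 (mmul d X (WQ h)) (transp (mmul d X (WK h)))))
                      (mmul d X (WV h)))"

definition f_attn :: "nat \<Rightarrow> nat \<Rightarrow> layer \<Rightarrow> mat \<Rightarrow> mat \<Rightarrow> mat" where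
  "f_attn K d L X B = (\<lambda>i j.
      sum_list (map (\<lambda>h. psi K d h X B i j) (headsA L))
    + sum_list (map (\<lambda>h. psi K d h X (transp B) i j) (headsAT L))
    + sum_list (map (\<lambda>h. psi K d h X idm i j) (headsI L))
    + X i j)"

definition f_mlp :: "nat \<Rightarrow> layer \<Rightarrow> mat \<Rightarrow> mat" where
  "f_mlp d L X =
     (let Z2 = relu (mmul d X (W1 L));
          Z3 = relu (mmul (hid1 L) Z2 (W2 L));
          Z4 = relu (mmul (hid2 L) Z3 (W3 L))
      in madd (mmul (hid3 L) Z4 (W4 L)) X)"

definition apply_layer :: "nat \<Rightarrow> nat \<Rightarrow> layer \<Rightarrow> mat \<Rightarrow> mat \<Rightarrow> mat" where
  "apply_layer K d L X B = f_mlp d L (f_attn K d L X B)"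

text \<open>Padded incident matrix of a weighted hypergraph with vertices 1..nv, hyperedges 1..ne,
  incidence relation inc (vertex i in edge j) and edge weights w.\<close>
definition padded_incident :: "nat \<Rightarrow> nat \<Rightarrow> (nat \<Rightarrow> nat \<Rightarrow> bool) \<Rightarrow> (nat \<Rightarrow> real) \<Rightarrow> mat" where
  "padded_incident nv ne inc w = (\<lambda>i j.
     if 2 \<le> i \<and> i \<le> nv + 1 \<and> 2 \<le> j \<and> j \<le> ne + 1 \<and> inc (i - 1) (j - 1)
     then w (j - 1) else 0)"

definition scalar_col :: "nat \<Rightarrow> mat \<Rightarrow> nat \<Rightarrow> bool" where
  "scalar_col K X c = (\<forall>i\<in>{2..K}. X i c = 0)"

definition global_col :: "nat \<Rightarrow> mat \<Rightarrow> nat \<Rightarrow> bool" where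
  "global_col K X c = (X 1 c = 1 \<and> (\<forall>i\<in>{2..K}. X i c = 0))"

definition local_col :: "nat \<Rightarrow> mat \<Rightarrow> nat \<Rightarrow> bool" where
  "local_col K X c = (X 1 c = 0 \<and> (\<forall>i\<in>{2..K}. X i c = 1))"

end

theory Submission
  imports Defs
begin

lemma sum_ind: "c \<in> {1..d} \<Longrightarrow> (\<Sum>k=1..d. (X::nat\<Rightarrow>real) k * (if k = c then 1 else 0)) = X c"
  by (simp add: if_distrib cong: if_cong)

lemma sum3: "(\<Sum>k=1..3. (f::nat\<Rightarrow>real) k) = f 1 + f 2 + f 3"
  by (simp add: numeral_3_eq_3 numeral_2_eq_2 sum.atLeast_Suc_atMost)

definition ind :: "nat \<Rightarrow> nat \<Rightarrow> real" where "ind c k = (if k = c then 1 else 0)"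

definition theL :: "nat \<Rightarrow> nat \<Rightarrow> nat \<Rightarrow> nat \<Rightarrow> layer" where
  "theL C D E Bg = \<lparr> headsA = [], headsAT = [], headsI = [], hid1 = 3, hid2 = 3, hid3 = 3,
     W1 = (\<lambda>k j. if j = 1 then ind C k + ind D k - ind Bg k else if j = 2 then ind E k
                 else if j = 3 then - ind E k else 0),
     W2 = (\<lambda>k j. if k = j then 1 else 0),
     W3 = (\<lambda>k j. if k = j then 1 else 0),
     W4 = (\<lambda>k j. if j = E then (if k = 1 then 1 else if k = 2 then -1 else if k = 3 then 1 else 0) else 0) \<rparr>"

lemma attn_id: "f_attn K d (theL C D E Bg) X B = X"
  by (simp add: f_attn_def theL_def)

lemma layer_val:
  assumes "C \<in> {1..d}" "D \<in> {1..d}" "E \<in> {1..d}" "Bg \<in> {1..d}"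
  shows "apply_layer K d (theL C D E Bg) X B i j =
     (if j = E then max (X i C + X i D - X i Bg) 0 else X i j)"
proof -
  have s: "\<And>c. c \<in> {1..d} \<Longrightarrow> (\<Sum>k=1..d. X i k * ind c k) = X i c"
    using sum_ind unfolding ind_def by blast
  have m1: "mmul d X (W1 (theL C D E Bg)) i 1 = X i C + X i D - X i Bg"
    "mmul d X (W1 (theL C D E Bg)) i 2 = X i E"
    "mmul d X (W1 (theL C D E Bg)) i 3 = - X i E"
    using s[OF assms(1)] s[OF assms(2)] s[OF assms(3)] s[OF assms(4)]
    by (simp_all add: mmul_def theL_def algebra_simps sum.distrib sum_subtractf sum_negf)
  define Z2 where "Z2 = relu (mmul d X (W1 (theL C D E Bg)))"
  have nn: "\<And>k. Z2 i k \<ge> 0" by (simp add: Z2_def relu_def)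
  have id3: "\<And>Z k. k \<in> {1..3} \<Longrightarrow> mmul 3 Z (\<lambda>k j. if k = j then 1 else 0) i k = Z i k"
    by (auto simp: mmul_def sum3 numeral_3_eq_3 le_Suc_eq)
  have r: "\<And>Z k. (\<And>k. Z i k \<ge> (0::real)) \<Longrightarrow> relu Z i k = Z i k"
    by (simp add: relu_def)
  define Z3 where "Z3 = relu (mmul 3 Z2 (W2 (theL C D E Bg)))"
  have z3: "\<And>k. k \<in> {1..3} \<Longrightarrow> Z3 i k = Z2 i k"
    using id3 nn by (simp add: Z3_def relu_def theL_def)
  have nn3: "\<And>k. Z3 i k \<ge> 0" by (simp add: Z3_def relu_def)
  define Z4 where "Z4 = relu (mmul 3 Z3 (W3 (theL C D E Bg)))"
  have z4: "\<And>k. k \<in> {1..3} \<Longrightarrow> Z4 i k = Z2 i k"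
    using id3 nn nn3 z3 by (simp add: Z4_def relu_def theL_def)
  have res: "apply_layer K d (theL C D E Bg) X B i j = mmul 3 Z4 (W4 (theL C D E Bg)) i j + X i j"
    unfolding apply_layer_def attn_id f_mlp_def Let_def Z4_def Z3_def Z2_def
    by (simp add: madd_def theL_def)
  have "mmul 3 Z4 (W4 (theL C D E Bg)) i j = (if j = E then Z2 i 1 - Z2 i 2 + Z2 i 3 else 0)"
    using z4[of 1] z4[of 2] z4[of 3] unfolding mmul_def sum3 by (simp add: theL_def)
  moreover have "Z2 i 1 = max (X i C + X i D - X i Bg) 0" "Z2 i 2 = max (X i E) 0"
    "Z2 i 3 = max (- X i E) 0" using m1 by (simp_all add: Z2_def relu_def)
  ultimately show ?thesis using res by (auto simp: max_def)
qed

theorem lemmaC8: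
  fixes \<Omega> :: real and K d C D E Bg Bl :: nat
  assumes "\<Omega> > 0"
    and "C \<in> {1..d}" "D \<in> {1..d}" "E \<in> {1..d}" "Bg \<in> {1..d}" "Bl \<in> {1..d}"
  shows "\<exists>L :: layer. \<forall>(X :: mat) nv ne inc w.
           K \<ge> max nv ne + 1
           \<longrightarrow> (\<forall>i\<in>{1..K}. \<forall>j\<in>{1..d}. \<bar>X i j\<bar> \<le> \<Omega>)
           \<longrightarrow> global_col K X Bg \<longrightarrow> local_col K X Bl
           \<longrightarrow> scalar_col K X C \<longrightarrow> scalar_col K X D \<longrightarrow> scalar_col K X E
           \<longrightarrow> X 1 C \<in> {0, 1} \<longrightarrow> X 1 D \<in> {0, 1}
           \<longrightarrow> (\<forall>i\<in>{1..K}. \<forall>j\<in>{1..d}.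
                  apply_layer K d L X (padded_incident nv ne inc w) i j =
                  (if i = 1 \<and> j = E
                   then (if X 1 C = 1 \<and> X 1 D = 1 then 1 else 0)
                   else X i j))"
proof (rule exI[of _ "theL C D E Bg"], intro allI impI ballI)
  fix X :: mat and nv ne :: nat and inc w i j
  assume g: "global_col K X Bg" and sC: "scalar_col K X C" and sD: "scalar_col K X D"
    and sE: "scalar_col K X E" and c01: "X 1 C \<in> {0, 1}" and d01: "X 1 D \<in> {0, 1}"
    and i: "i \<in> {1..K}" and j: "j \<in> {1..d}"
  show "apply_layer K d (theL C D E Bg) X (padded_incident nv ne inc w) i j =
        (if i = 1 \<and> j = E then (if X 1 C = 1 \<and> X 1 D = 1 then 1 else 0) else X i j)"
  proof (cases "i = 1")
    case True
    then show ?thesis using layer_val[OF assms(2-5)] g c01 d01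
      by (auto simp: global_col_def)
  next
    case False
    then have "i \<in> {2..K}" using i by auto
    then show ?thesis using layer_val[OF assms(2-5)] g sC sD sE False
      by (auto simp: global_col_def scalar_col_def)
  qed
qed

end
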